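(* Consider the heteroscedastic linear model $y(i,k)=\tau_i+\mu+\mathbf g^T(k)\beta+\varepsilon(i,k)$ with treatments $i\in\{1,\ldots,v_1\}$, covariate indices $k\in\{1,\ldots,d\}$, known regressors $\mathbf g(k)\in\mathbb R^{v_2}$, uncorrelated mean-zero errors with $\mathrm{Var}(\varepsilon(i,k))=\sigma^2/\lambda_i$, $\lambda_i>0$ known. Let $\Phi$ be an eigenvalue-based information function and let $\xi^*=w^*\otimes\alpha^*$ be a product design that is $\Phi$-optimal for $\mathbf A^T\theta$. Let $\xi$ be a design satisfying $\mathbf M(\xi)\mathbf G\mathbf A=\mathbf A$, where $$\mathbf G=\mathrm{diag}\Big(\mathbf M_1^{-1}(w^* ),\ \big(\textstyle\sum_i\lambda_iw_i^*\big)^{-1}\mathbf M_2^-(\alpha^* )\Big)$$ and $\mathbf M_2^-(\alpha^* )$ is any generalized inverse of $\mathbf M_2(\alpha^* )$. Then $\xi$ is $\Phi$-optimal for $\mathbf A^T\theta$. In particular, let $\mathbf S^-(\alpha^* )$ be a generalized inverse of $\mathbf S(\alpha^* )$ and let $\xi$ be a design with marginal treatment design $w$ satisfying (a) $w_i=w_i^*$ for $i=1,\ldots,v_1$; (b) $\Big[\frac{1}{w_1^*}\sum_{k=1}^d\xi(1,k)\mathbf g(k),\ldots,\frac{1}{w_{v_1}^*}\sum_{k=1}^d\xi(v_1,k)\mathbf g(k)\Big]\mathbf Q_1=\mathbf 0_{v_2\times s_1}$; (c) the $v_1\times v_2$ matrix whose $i$th row is $\sum_k(\xi(i,k)-w_i^*\alpha_k^*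 )\mathbf g^T(k)$, multiplied on the right by $\mathbf S^-(\alpha^* )\mathbf K$, equals $\mathbf 0_{v_1\times s_2}$; (d) $\big(\sum_{i=1}^{v_1}\lambda_iw_i^*\big)^{-1}\Big(\sum_{i,k}\lambda_i\xi(i,k)\mathbf g(k)\mathbf g^T(k)-\big(\sum_{i,k}\lambda_i\xi(i,k)\mathbf g(k)\big)\sum_{k=1}^{d}\alpha_k^*\mathbf g^T(k)\Big)\mathbf S^-(\alpha^* )\mathbf K=\mathbf K$. Then $\xi$ is $\Phi$-optimal for $\mathbf A^T\theta$.
   Context: Write $\theta=(\tau^T,\mu,\beta^T)^T$, $\mathbf h(k)=(1,\mathbf g^T(k))^T$, $\mathbf f(i,k)=(\mathbf e_i^T,1,\mathbf g^T(k))^T$. A design $\xi$ is a nonnegative function on $\{1,\ldots,v_1\}\times\{1,\ldots,d\}$ summing to one, with moment matrix $\mathbf M(\xi)=\sum_{i,k}\xi(i,k)\lambda_i\mathbf f(i,k)\mathbf f^T(i,k)$; its marginal treatment design is $w_i=\sum_k\xi(i,k)$ and marginal covariate design $\alpha_k=\sum_i\xi(i,k)$. A product design is $(w\otimes\alpha)(i,k)=w_i\alpha_k$ for probability vectors $w\in\mathbb R^{v_1}$, $\alpha\in\mathbb R^d$. Let $\mathbf Q_1\in\mathbb R^{v_1\times s_1}$ have full column rank, satisfy $\mathbf Q_1^T\mathbf 1_{v_1}=\mathbf 0$ and have no zero row; let $\mathbf K\in\mathbb R^{v_2\times s_2}$ have full column rank; $\mathbf Q_2=(\mathbf 0_{s_2},\mathbf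 K^T)^T$, $\mathbf A=\mathrm{diag}(\mathbf Q_1,\mathbf Q_2)$. A design is feasible for $\mathbf A^T\theta$ if $\mathcal C(\mathbf A)\subseteq\mathcal C(\mathbf M(\xi))$, with information matrix $\mathbf N_{\mathbf A}(\xi)=(\mathbf A^T\mathbf M^-(\xi)\mathbf A)^{-1}$; it is $\Phi$-optimal if feasible and maximizing $\Phi(\mathbf N_{\mathbf A}(\xi))$ over feasible designs. Notation: $\mathbf M_1(w)=\mathrm{diag}(\lambda_1w_1,\ldots,\lambda_{v_1}w_{v_1})$; $\mathbf M_2(\alpha)=\sum_k\alpha_k\mathbf h(k)\mathbf h^T(k)$; $\mathbf S(\alpha)=\sum_k\alpha_k\mathbf g(k)\mathbf g^T(k)-(\sum_k\alpha_k\mathbf g(k))(\sum_k\alpha_k\mathbf g(k))^T$. An information function is a positively homogeneous, concave, nonnegative, nonconstant, upper semicontinuous function on nonnegative definite $(s_1+s_2)\times(s_1+s_2)$ matrices; it is eigenvalue-based if it depends only on the eigenvalues of its argument. *)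

theory Defs
  imports "HOL-Analysis.Analysis" "HOL-Computational_Algebra.Polynomial"
begin

text \<open>Treatments are indexed by a finite type 't (v1 = CARD('t)), covariate
indices by a finite type 'k (d = CARD('k)), regressors live in real^'v (v2 = CARD('v)).
The parameter vector theta = (tau, mu, beta) is indexed by 't + (unit + 'v).\<close>

definition outer :: "real^'n \<Rightarrow> real^'m \<Rightarrow> real^'m^'n" where
  "outer x y = (\<chi> i j. x$i * y$j)"

definition blockdiag :: "real^'b^'a \<Rightarrow> real^'d^'c \<Rightarrow> real^('b + 'd)^('a + 'c)" where
  "blockdiag X Y = (\<chi> r s. case (r, s) of
       (Inl i, Inl j) \<Rightarrow> X$i$j
     | (Inr i, Inr j) \<Rightarrow> Y$i$j
     | _ \<Rightarrow> 0)"

definition gen_inverse :: "real^'n^'m \<Rightarrow> real^'m^'n \<Rightarrow> bool" where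
  "gen_inverse X Y \<longleftrightarrow> X ** Y ** X = X"

definition full_col_rank :: "real^'c^'r \<Rightarrow> bool" where
  "full_col_rank X \<longleftrightarrow> rank X = CARD('c)"

definition is_design :: "('t::finite \<Rightarrow> 'k::finite \<Rightarrow> real) \<Rightarrow> bool" where
  "is_design \<xi> \<longleftrightarrow> (\<forall>i k. 0 \<le> \<xi> i k) \<and> (\<Sum>i\<in>UNIV. \<Sum>k\<in>UNIV. \<xi> i k) = 1"

definition prob_vec :: "('a::finite \<Rightarrow> real) \<Rightarrow> bool" where
  "prob_vec w \<longleftrightarrow> (\<forall>i. 0 \<le> w i) \<and> (\<Sum>i\<in>UNIV. w i) = 1"

definition product_design :: "('t \<Rightarrow> real) \<Rightarrow> ('k \<Rightarrow> real) \<Rightarrow> ('t \<Rightarrow> 'k \<Rightarrow> real)" where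
  "product_design w \<alpha> = (\<lambda>i k. w i * \<alpha> k)"

definition hvec :: "('k \<Rightarrow> real^'v::finite) \<Rightarrow> 'k \<Rightarrow> real^(unit + 'v)" where
  "hvec g k = (\<chi> j. case j of Inl _ \<Rightarrow> 1 | Inr l \<Rightarrow> g k $ l)"

definition fvec :: "('k \<Rightarrow> real^'v::finite) \<Rightarrow> 't::finite \<Rightarrow> 'k \<Rightarrow> real^('t + (unit + 'v))" where
  "fvec g i k = (\<chi> j. case j of Inl i' \<Rightarrow> (if i' = i then 1 else 0)
                             | Inr (Inl _) \<Rightarrow> 1
                             | Inr (Inr l) \<Rightarrow> g k $ l)"

definition moment :: "('t::finite \<Rightarrow> real) \<Rightarrow> ('k::finite \<Rightarrow> real^'v) \<Rightarrow> ('t \<Rightarrow> 'k \<Rightarrow> real)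
    \<Rightarrow> real^('t + (unit + 'v))^('t + (unit + 'v))" where
  "moment lam g \<xi> = (\<Sum>i\<in>UNIV. \<Sum>k\<in>UNIV. (\<xi> i k * lam i) *\<^sub>R outer (fvec g i k) (fvec g i k))"

definition M1 :: "('t::finite \<Rightarrow> real) \<Rightarrow> ('t \<Rightarrow> real) \<Rightarrow> real^'t^'t" where
  "M1 lam w = (\<chi> i j. if i = j then lam i * w i else 0)"

definition M2 :: "('k::finite \<Rightarrow> real^'v) \<Rightarrow> ('k \<Rightarrow> real) \<Rightarrow> real^(unit + 'v)^(unit + 'v)" where
  "M2 g \<alpha> = (\<Sum>k\<in>UNIV. \<alpha> k *\<^sub>R outer (hvec g k) (hvec g k))"

definition Smat :: "('k::finite \<Rightarrow> real^'v) \<Rightarrow> ('k \<Rightarrow> real) \<Rightarrow> real^'v^'v" where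
  "Smat g \<alpha> = (\<Sum>k\<in>UNIV. \<alpha> k *\<^sub>R outer (g k) (g k))
               - outer (\<Sum>k\<in>UNIV. \<alpha> k *\<^sub>R g k) (\<Sum>k\<in>UNIV. \<alpha> k *\<^sub>R g k)"

definition Q2mat :: "real^'b^'v \<Rightarrow> real^'b^(unit + 'v)" where
  "Q2mat K = (\<chi> r c. case r of Inl _ \<Rightarrow> 0 | Inr l \<Rightarrow> K$l$c)"

definition Amat :: "real^'a^'t \<Rightarrow> real^'b^'v \<Rightarrow> real^('a + 'b)^('t + (unit + 'v))" where
  "Amat Q1 K = blockdiag Q1 (Q2mat K)"

definition feasible :: "('t::finite \<Rightarrow> real) \<Rightarrow> ('k::finite \<Rightarrow> real^'v::finite) \<Rightarrow>
    real^'s^('t + (unit + 'v)) \<Rightarrow> ('t \<Rightarrow> 'k \<Rightarrow> real) \<Rightarrow> bool" where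
  "feasible lam g A \<xi> \<longleftrightarrow> is_design \<xi> \<and> range ((*v) A) \<subseteq> range ((*v) (moment lam g \<xi>))"

text \<open>Information matrix N_A(xi) = (A^T M^-(xi) A)^{-1}, for some generalized inverse
M^-(xi) (independent of the choice for feasible designs).\<close>
definition info_matrix :: "('t::finite \<Rightarrow> real) \<Rightarrow> ('k::finite \<Rightarrow> real^'v::finite) \<Rightarrow>
    real^'s::finite^('t + (unit + 'v)) \<Rightarrow> ('t \<Rightarrow> 'k \<Rightarrow> real) \<Rightarrow> real^'s^'s" where
  "info_matrix lam g A \<xi> =
     matrix_inv (transpose A ** (SOME G. gen_inverse (moment lam g \<xi>) G) ** A)"

definition phi_optimal :: "(real^'s^'s \<Rightarrow> real) \<Rightarrow> ('t::finite \<Rightarrow> real) \<Rightarrow>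
    ('k::finite \<Rightarrow> real^'v::finite) \<Rightarrow> real^'s::finite^('t + (unit + 'v)) \<Rightarrow>
    ('t \<Rightarrow> 'k \<Rightarrow> real) \<Rightarrow> bool" where
  "phi_optimal \<Phi> lam g A \<xi> \<longleftrightarrow> feasible lam g A \<xi> \<and>
     (\<forall>\<eta>. feasible lam g A \<eta> \<longrightarrow> \<Phi> (info_matrix lam g A \<eta>) \<le> \<Phi> (info_matrix lam g A \<xi>))"

definition nnd :: "real^'n^'n \<Rightarrow> bool" where
  "nnd C \<longleftrightarrow> transpose C = C \<and> (\<forall>x. 0 \<le> x \<bullet> (C *v x))"

definition information_function :: "(real^'n^'n \<Rightarrow> real) \<Rightarrow> bool" where
  "information_function \<Phi> \<longleftrightarrow>
     (\<forall>C \<delta>. nnd C \<and> 0 < \<delta> \<longrightarrow> \<Phi> (\<delta> *\<^sub>R C) = \<delta> * \<Phi> C) \<and>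
     (\<forall>C D a. nnd C \<and> nnd D \<and> 0 \<le> a \<and> a \<le> 1 \<longrightarrow>
        (1 - a) * \<Phi> C + a * \<Phi> D \<le> \<Phi> ((1 - a) *\<^sub>R C + a *\<^sub>R D)) \<and>
     (\<forall>C. nnd C \<longrightarrow> 0 \<le> \<Phi> C) \<and>
     (\<exists>C D. nnd C \<and> nnd D \<and> \<Phi> C \<noteq> \<Phi> D) \<and>
     (\<forall>a. closed {C. nnd C \<and> a \<le> \<Phi> C})"

text \<open>Characteristic polynomial det(X I - C); its roots (with multiplicity) are the eigenvalues.\<close>
definition charpoly :: "real^'n^'n \<Rightarrow> real poly" where
  "charpoly C = det (\<chi> i j. (if i = j then [:0, 1:] else 0) - [:C$i$j:])"

definition eigenvalue_based :: "(real^'n^'n \<Rightarrow> real) \<Rightarrow> bool" where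
  "eigenvalue_based \<Phi> \<longleftrightarrow>
     (\<forall>C D. nnd C \<and> nnd D \<and> charpoly C = charpoly D \<longrightarrow> \<Phi> C = \<Phi> D)"

end

theory Submission
  imports Defs
begin

lemma sum_UNIV_plus: "(\<Sum>x\<in>(UNIV::('a::finite+'b::finite) set). f x) = (\<Sum>a\<in>UNIV. f (Inl a)) + (\<Sum>b\<in>UNIV. f (Inr b))"
proof -
  have "(\<Sum>x\<in>(UNIV::('a+'b) set). f x) = sum f (Inl ` UNIV) + sum f (Inr ` UNIV)"
    by (subst UNIV_sum, rule sum.union_disjoint) auto
  also have "\<dots> = (\<Sum>a\<in>UNIV. f (Inl a)) + (\<Sum>b\<in>UNIV. f (Inr b))"
    by (simp add: sum.reindex)
  finally show ?thesis .
qed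

lemma fvec_Inl[simp]: "fvec g i k $ Inl i' = (if i' = i then 1 else 0)" by (simp add: fvec_def)
lemma fvec_Inr[simp]: "fvec g i k $ Inr p = hvec g k $ p" by (simp add: fvec_def hvec_def split: sum.split)
lemma hvec_Inl[simp]: "hvec g k $ Inl u = 1" by (simp add: hvec_def)
lemma hvec_Inr[simp]: "hvec g k $ Inr l = g k $ l" by (simp add: hvec_def)

lemma delta_mult[simp]: "(\<Sum>a\<in>(UNIV::'a::finite set). (if a = i then 1 else (0::real)) * f a) = f i"
proof -
  have "(\<Sum>a\<in>UNIV. (if a = i then 1 else (0::real)) * f a) = (\<Sum>a\<in>UNIV. if a = i then f a else 0)"
    by (rule sum.cong) auto
  then show ?thesis by simp
qed
lemma delta_mult0[simp]: "(\<Sum>a\<in>UNIV. (if a = i then 1 else (0::real)) * 0) = 0"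
  by simp
lemma sum_unit[simp]: "(\<Sum>u\<in>(UNIV::unit set). f u) = f ()" by (simp add: UNIV_unit)

lemma blockdiag_entries[simp]:
  "blockdiag X Y $ Inl i $ Inl j = X$i$j" "blockdiag X Y $ Inr i' $ Inr j' = Y$i'$j'"
  "blockdiag X Y $ Inl i $ Inr j' = 0" "blockdiag X Y $ Inr i' $ Inl j = 0"
  by (simp_all add: blockdiag_def)

lemma blockdiag_mult: "blockdiag X Y ** blockdiag X' Y' = blockdiag (X ** X') (Y ** Y')"
  unfolding vec_eq_iff
proof (intro allI)
  fix r s
  show "(blockdiag X Y ** blockdiag X' Y') $ r $ s = blockdiag (X ** X') (Y ** Y') $ r $ s"
    by (cases r; cases s) (simp_all add: matrix_matrix_mult_def sum_UNIV_plus)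
qed

lemma moment_entry:
  "moment lam g \<xi> $ r $ s = (\<Sum>i\<in>UNIV. \<Sum>k\<in>UNIV. \<xi> i k * lam i * (fvec g i k $ r * fvec g i k $ s))"
  unfolding moment_def outer_def by (simp add: sum_component)

lemma moment_mv:
  "(moment lam g \<xi> *v y) $ r = (\<Sum>i\<in>UNIV. \<Sum>k\<in>UNIV. \<xi> i k * lam i * fvec g i k $ r * (\<Sum>t\<in>UNIV. fvec g i k $ t * y $ t))"
proof -
  have "(moment lam g \<xi> *v y) $ r = (\<Sum>t\<in>UNIV. \<Sum>i\<in>UNIV. \<Sum>k\<in>UNIV. \<xi> i k * lam i * fvec g i k $ r * (fvec g i k $ t * y $ t))"
    by (simp add: matrix_vector_mult_def moment_entry sum_distrib_right mult.assoc)
  also have "\<dots> = (\<Sum>i\<in>UNIV. \<Sum>t\<in>UNIV. \<Sum>k\<in>UNIV. \<xi> i k * lam i * fvec g i k $ r * (fvec g i k $ t * y $ t))"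
    by (rule sum.swap)
  also have "\<dots> = (\<Sum>i\<in>UNIV. \<Sum>k\<in>UNIV. \<Sum>t\<in>UNIV. \<xi> i k * lam i * fvec g i k $ r * (fvec g i k $ t * y $ t))"
    by (rule sum.cong[OF refl], rule sum.swap)
  also have "\<dots> = (\<Sum>i\<in>UNIV. \<Sum>k\<in>UNIV. \<xi> i k * lam i * fvec g i k $ r * (\<Sum>t\<in>UNIV. fvec g i k $ t * y $ t))"
    by (simp add: sum_distrib_left)
  finally show ?thesis .
qed

lemma fvec_dot: "(\<Sum>t\<in>UNIV. fvec g i k $ t * y $ t) = y $ Inl i + (\<Sum>p\<in>UNIV. hvec g k $ p * y $ Inr p)"
  by (simp add: sum_UNIV_plus )

lemma moment_mm:
  "(moment lam g \<xi> ** Z) $ r $ s = (\<Sum>i\<in>UNIV. \<Sum>k\<in>UNIV. \<xi> i k * lam i * fvec g i k $ r * (\<Sum>t\<in>UNIV. fvec g i k $ t * Z $ t $ s))"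
proof -
  have "(moment lam g \<xi> ** Z) $ r $ s = (moment lam g \<xi> *v column s Z) $ r"
    by (simp add: matrix_matrix_mult_def matrix_vector_mult_def column_def)
  then show ?thesis by (simp add: moment_mv column_def)
qed

lemma moment_mm_bd:
  "(moment lam g \<xi> ** blockdiag B Y) $ r $ s = (\<Sum>i\<in>UNIV. \<Sum>k\<in>UNIV. \<xi> i k * lam i * fvec g i k $ r *
     (case s of Inl a \<Rightarrow> B$i$a | Inr b \<Rightarrow> (\<Sum>p\<in>UNIV. hvec g k $ p * Y $ p $ b)))"
  unfolding moment_mm by (cases s) (simp_all add: sum_UNIV_plus )

lemma M2_entry: "M2 g a $ p $ q = (\<Sum>k\<in>UNIV. a k * (hvec g k $ p * hvec g k $ q))"
  unfolding M2_def outer_def by (simp add: sum_component)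


lemma M2_mv: "(M2 g a *v v) $ p = (\<Sum>k\<in>UNIV. a k * hvec g k $ p * (\<Sum>q\<in>UNIV. hvec g k $ q * v $ q))"
proof -
  have "(M2 g a *v v) $ p = (\<Sum>q\<in>UNIV. \<Sum>k\<in>UNIV. a k * hvec g k $ p * (hvec g k $ q * v $ q))"
    by (simp add: matrix_vector_mult_def M2_entry sum_distrib_right mult.assoc)
  also have "\<dots> = (\<Sum>k\<in>UNIV. \<Sum>q\<in>UNIV. a k * hvec g k $ p * (hvec g k $ q * v $ q))"
    by (rule sum.swap)
  also have "\<dots> = (\<Sum>k\<in>UNIV. a k * hvec g k $ p * (\<Sum>q\<in>UNIV. hvec g k $ q * v $ q))"
    by (simp add: sum_distrib_left)
  finally show ?thesis .
qed

lemma delta_sum2: "(\<Sum>i\<in>(UNIV::'a::finite set). \<Sum>k\<in>(UNIV::'b::finite set). F i k * (if i' = i then 1 else (0::real)) * G i k) = (\<Sum>k\<in>UNIV. F i' k * G i' k)"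
proof -
  have "(\<Sum>i\<in>(UNIV::'a::finite set). \<Sum>k\<in>(UNIV::'b::finite set). F i k * (if i' = i then 1 else (0::real)) * G i k)
     = (\<Sum>i\<in>UNIV. if i = i' then (\<Sum>k\<in>UNIV. F i k * G i k) else 0)"
    by (rule sum.cong) auto
  then show ?thesis by simp
qed

lemma pd_mv_Inl:
  assumes "prob_vec \<alpha>"
  shows "(moment lam g (product_design w \<alpha>) *v y) $ Inl i
     = lam i * w i * (y $ Inl i + (M2 g \<alpha> *v (\<chi> p. y $ Inr p)) $ Inl ())"
proof -
  have "(moment lam g (product_design w \<alpha>) *v y) $ Inl i
     = (\<Sum>k\<in>UNIV. w i * \<alpha> k * lam i * (y $ Inl i + (\<Sum>p\<in>UNIV. hvec g k $ p * y $ Inr p)))"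
    unfolding moment_mv fvec_dot fvec_Inl delta_sum2 by (simp add: product_design_def)
  also have "\<dots> = lam i * w i * (y $ Inl i * (\<Sum>k\<in>UNIV. \<alpha> k) + (\<Sum>k\<in>UNIV. \<alpha> k * (\<Sum>p\<in>UNIV. hvec g k $ p * y $ Inr p)))"
  proof -
    have "(\<Sum>k\<in>UNIV. w i * \<alpha> k * lam i * (y $ Inl i + (\<Sum>p\<in>UNIV. hvec g k $ p * y $ Inr p)))
      = (\<Sum>k\<in>UNIV. (lam i * w i * y $ Inl i) * \<alpha> k + (lam i * w i) * (\<alpha> k * (\<Sum>p\<in>UNIV. hvec g k $ p * y $ Inr p)))"
      by (rule sum.cong) (simp_all add: algebra_simps)
    also have "\<dots> = (lam i * w i * y $ Inl i) * (\<Sum>k\<in>UNIV. \<alpha> k) + (lam i * w i) * (\<Sum>k\<in>UNIV. \<alpha> k * (\<Sum>p\<in>UNIV. hvec g k $ p * y $ Inr p))"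
      by (simp only: sum.distrib sum_distrib_left)
    finally show ?thesis by (simp add: algebra_simps)
  qed
  also have "\<dots> = lam i * w i * (y $ Inl i + (M2 g \<alpha> *v (\<chi> p. y $ Inr p)) $ Inl ())"
    using assms by (simp add: prob_vec_def M2_mv)
  finally show ?thesis .
qed

lemma pd_mv_Inr:
  assumes "prob_vec \<alpha>"
  shows "(moment lam g (product_design w \<alpha>) *v y) $ Inr p
     = (\<Sum>i\<in>UNIV. lam i * w i * y $ Inl i) * M2 g \<alpha> $ p $ Inl ()
       + (\<Sum>i\<in>UNIV. lam i * w i) * (M2 g \<alpha> *v (\<chi> p. y $ Inr p)) $ p"
proof -
  have "(moment lam g (product_design w \<alpha>) *v y) $ Inr p
     = (\<Sum>i\<in>UNIV. \<Sum>k\<in>UNIV. (lam i * w i) * (\<alpha> k * hvec g k $ p) * (y $ Inl i + (\<Sum>q\<in>UNIV. hvec g k $ q * y $ Inr q)))"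
    unfolding moment_mv fvec_dot fvec_Inr by (simp add: product_design_def algebra_simps)
  also have "\<dots> = (\<Sum>i\<in>UNIV. lam i * w i * y $ Inl i) * (\<Sum>k\<in>UNIV. \<alpha> k * hvec g k $ p)
       + (\<Sum>i\<in>UNIV. lam i * w i) * (\<Sum>k\<in>UNIV. \<alpha> k * hvec g k $ p * (\<Sum>q\<in>UNIV. hvec g k $ q * y $ Inr q))"
  proof -
    let ?Z = "\<lambda>k. (\<Sum>q\<in>UNIV. hvec g k $ q * y $ Inr q)"
    have "(\<Sum>i\<in>UNIV. \<Sum>k\<in>UNIV. (lam i * w i) * (\<alpha> k * hvec g k $ p) * (y $ Inl i + ?Z k))
      = (\<Sum>i\<in>UNIV. \<Sum>k\<in>UNIV. (lam i * w i * y $ Inl i) * (\<alpha> k * hvec g k $ p) + (lam i * w i) * (\<alpha> k * hvec g k $ p * ?Z k))"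
      by (intro sum.cong refl) (simp add: algebra_simps)
    also have "\<dots> = (\<Sum>i\<in>UNIV. (lam i * w i * y $ Inl i) * (\<Sum>k\<in>UNIV. \<alpha> k * hvec g k $ p) + (lam i * w i) * (\<Sum>k\<in>UNIV. \<alpha> k * hvec g k $ p * ?Z k))"
      by (simp only: sum.distrib sum_distrib_left)
    also have "\<dots> = (\<Sum>i\<in>UNIV. lam i * w i * y $ Inl i) * (\<Sum>k\<in>UNIV. \<alpha> k * hvec g k $ p)
       + (\<Sum>i\<in>UNIV. lam i * w i) * (\<Sum>k\<in>UNIV. \<alpha> k * hvec g k $ p * ?Z k)"
      by (simp only: sum.distrib sum_distrib_right)
    finally show ?thesis .
  qed
  also have "\<dots> = (\<Sum>i\<in>UNIV. lam i * w i * y $ Inl i) * M2 g \<alpha> $ p $ Inl ()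
       + (\<Sum>i\<in>UNIV. lam i * w i) * (M2 g \<alpha> *v (\<chi> p. y $ Inr p)) $ p"
    by (simp add: M2_mv M2_entry)
  finally show ?thesis .
qed


lemma Amat_mv_Inl: "(Amat Q1 K *v x) $ Inl i = (\<Sum>a\<in>UNIV. Q1 $ i $ a * x $ Inl a)"
  by (simp add: Amat_def matrix_vector_mult_def sum_UNIV_plus)
lemma Amat_mv_Inr: "(Amat Q1 K *v x) $ Inr p = (\<Sum>b\<in>UNIV. Q2mat K $ p $ b * x $ Inr b)"
  by (simp add: Amat_def matrix_vector_mult_def sum_UNIV_plus)
lemma Q2mat_Inl[simp]: "Q2mat K $ Inl u $ b = 0" by (simp add: Q2mat_def)
lemma Q2mat_Inr[simp]: "Q2mat K $ Inr l $ b = K $ l $ b" by (simp add: Q2mat_def)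

lemma pd_feas_range:
  fixes Q1 :: "real^'a::finite^'t::finite" and K :: "real^'b::finite^'v::finite" and x :: "real^'b"
  assumes feas: "range ((*v) (Amat Q1 K)) \<subseteq> range ((*v) (moment lam g (product_design w \<alpha>)))"
    and a: "prob_vec \<alpha>"
  shows "\<exists>z. M2 g \<alpha> *v z = Q2mat K *v x"
proof -
  define x' where "x' = ((\<chi> t. case t of Inl _ \<Rightarrow> 0 | Inr b \<Rightarrow> x $ b) :: real^('a+'b))"
  have "Amat Q1 K *v x' \<in> range ((*v) (moment lam g (product_design w \<alpha>)))"
    using feas by (rule subsetD) simp
  then obtain y where y: "moment lam g (product_design w \<alpha>) *v y = Amat Q1 K *v x'"
    by (metis imageE)
  define yb where "yb = (\<chi> p. y $ Inr p)"
  define m0 where "m0 = (M2 g \<alpha> *v yb) $ Inl ()"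
  define c where "c = (\<Sum>i\<in>UNIV. lam i * w i)"
  have i: "lam i * w i * y $ Inl i = - (lam i * w i * m0)" for i
  proof -
    have "(moment lam g (product_design w \<alpha>) *v y) $ Inl i = 0"
      using y by (simp add: Amat_mv_Inl x'_def)
    then show ?thesis using pd_mv_Inl[OF a, of lam g w y i] by (simp add: yb_def m0_def algebra_simps)
  qed
  have s: "(\<Sum>i\<in>UNIV. lam i * w i * y $ Inl i) = - c * m0"
    by (simp add: i c_def sum_negf sum_distrib_right)
  define z where "z = c *\<^sub>R (yb - m0 *\<^sub>R axis (Inl ()) 1)"
  have "(M2 g \<alpha> *v z) $ p = (Q2mat K *v x) $ p" for p
  proof -
    have "(Q2mat K *v x) $ p = (Amat Q1 K *v x') $ Inr p"
      by (simp add: Amat_mv_Inr x'_def) (simp add: matrix_vector_mult_def)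
    also have "\<dots> = (moment lam g (product_design w \<alpha>) *v y) $ Inr p" using y by simp
    also have "\<dots> = - c * m0 * M2 g \<alpha> $ p $ Inl () + c * (M2 g \<alpha> *v yb) $ p"
      using pd_mv_Inr[OF a, of lam g w y p] s by (simp add: yb_def c_def)
    also have "\<dots> = (M2 g \<alpha> *v z) $ p"
      by (simp add: z_def matrix_vector_mult_basis matrix_vector_mult_diff_distrib
           matrix_vector_mult_scaleR column_def algebra_simps)
    finally show ?thesis by simp
  qed
  then show ?thesis by (metis vec_eq_iff)
qed

lemma pd_feas_pos:
  fixes Q1 :: "real^'a::finite^'t::finite" and K :: "real^'b::finite^'v::finite"
  assumes feas: "range ((*v) (Amat Q1 K)) \<subseteq> range ((*v) (moment lam g (product_design w \<alpha>)))"
    and a: "prob_vec \<alpha>" and nz: "row i Q1 \<noteq> 0"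
  shows "w i \<noteq> 0"
proof
  assume w0: "w i = 0"
  define x where "x = row i Q1"
  define x' where "x' = ((\<chi> t. case t of Inl a \<Rightarrow> x $ a | Inr _ \<Rightarrow> 0) :: real^('a+'b))"
  have "Amat Q1 K *v x' \<in> range ((*v) (moment lam g (product_design w \<alpha>)))"
    using feas by (rule subsetD) simp
  then obtain y where y: "moment lam g (product_design w \<alpha>) *v y = Amat Q1 K *v x'"
    by (metis imageE)
  have "(Amat Q1 K *v x') $ Inl i = 0"
    using y[symmetric] pd_mv_Inl[OF a, of lam g w y i] w0 by simp
  then have "(\<Sum>a\<in>UNIV. Q1 $ i $ a * Q1 $ i $ a) = 0"
    by (simp add: Amat_mv_Inl x'_def x_def row_def)
  then have "x \<bullet> x = 0" by (simp add: inner_vec_def x_def row_def)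
  then show False using nz x_def by simp
qed


lemma M2_mm: "(M2 g a ** Y) $ p $ b = (\<Sum>k\<in>UNIV. a k * hvec g k $ p * (\<Sum>q\<in>UNIV. hvec g k $ q * Y $ q $ b))"
proof -
  have "(M2 g a ** Y) $ p $ b = (M2 g a *v column b Y) $ p"
    by (simp add: matrix_matrix_mult_def matrix_vector_mult_def column_def)
  then show ?thesis by (simp add: M2_mv column_def)
qed

lemma sum_pd_split: "(\<Sum>i\<in>UNIV. \<Sum>k\<in>UNIV. (u i * v k) * F i * (G k::real)) = (\<Sum>i\<in>UNIV. u i * F i) * (\<Sum>k\<in>UNIV. v k * G k)"
  unfolding sum_product by (simp add: algebra_simps)

lemma pd_LL:
  assumes sa: "(\<Sum>k\<in>UNIV. \<alpha> k) = 1"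
  shows "(moment lam g (product_design w \<alpha>) ** blockdiag B Y) $ Inl i' $ Inl j = lam i' * w i' * B $ i' $ j"
proof -
  have "(moment lam g (product_design w \<alpha>) ** blockdiag B Y) $ Inl i' $ Inl j
     = (\<Sum>k\<in>UNIV. product_design w \<alpha> i' k * lam i' * B $ i' $ j)"
    unfolding moment_mm_bd fvec_Inl by (simp only: sum.case delta_sum2)
  also have "\<dots> = (\<Sum>k\<in>UNIV. (lam i' * w i' * B $ i' $ j) * \<alpha> k)"
    by (rule sum.cong) (simp_all add: product_design_def)
  also have "\<dots> = lam i' * w i' * B $ i' $ j" by (simp only: sum_distrib_left[symmetric] sa mult_1_right)
  finally show ?thesis .
qed

lemma pd_LR:
  "(moment lam g (product_design w \<alpha>) ** blockdiag B Y) $ Inl i' $ Inr b = lam i' * w i' * (M2 g \<alpha> ** Y) $ Inl () $ b"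
proof -
  have "(moment lam g (product_design w \<alpha>) ** blockdiag B Y) $ Inl i' $ Inr b
     = (\<Sum>k\<in>UNIV. product_design w \<alpha> i' k * lam i' * (\<Sum>p\<in>UNIV. hvec g k $ p * Y $ p $ b))"
    unfolding moment_mm_bd fvec_Inl by (simp only: sum.case delta_sum2)
  also have "\<dots> = (\<Sum>k\<in>UNIV. (lam i' * w i') * (\<alpha> k * hvec g k $ Inl () * (\<Sum>p\<in>UNIV. hvec g k $ p * Y $ p $ b)))"
    by (rule sum.cong) (simp_all add: product_design_def)
  also have "\<dots> = lam i' * w i' * (M2 g \<alpha> ** Y) $ Inl () $ b"
    by (simp only: sum_distrib_left[symmetric] M2_mm)
  finally show ?thesis .
qed

lemma pd_RL:
  "(moment lam g (product_design w \<alpha>) ** blockdiag B Y) $ Inr p $ Inl j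
    = (\<Sum>i\<in>UNIV. w i * (lam i * B $ i $ j)) * (\<Sum>k\<in>UNIV. \<alpha> k * hvec g k $ p)"
proof -
  have "(moment lam g (product_design w \<alpha>) ** blockdiag B Y) $ Inr p $ Inl j
     = (\<Sum>i\<in>UNIV. \<Sum>k\<in>UNIV. (w i * \<alpha> k) * (lam i * B $ i $ j) * hvec g k $ p)"
    unfolding moment_mm_bd fvec_Inr
    by (intro sum.cong refl) (simp add: product_design_def)
  also have "\<dots> = (\<Sum>i\<in>UNIV. w i * (lam i * B $ i $ j)) * (\<Sum>k\<in>UNIV. \<alpha> k * hvec g k $ p)"
    by (rule sum_pd_split)
  finally show ?thesis .
qed

lemma pd_RR:
  "(moment lam g (product_design w \<alpha>) ** blockdiag B Y) $ Inr p $ Inr b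
    = (\<Sum>i\<in>UNIV. w i * lam i) * (M2 g \<alpha> ** Y) $ p $ b"
proof -
  have "(moment lam g (product_design w \<alpha>) ** blockdiag B Y) $ Inr p $ Inr b
     = (\<Sum>i\<in>UNIV. \<Sum>k\<in>UNIV. (w i * \<alpha> k) * lam i * (hvec g k $ p * (\<Sum>q\<in>UNIV. hvec g k $ q * Y $ q $ b)))"
    unfolding moment_mm_bd fvec_Inr
    by (intro sum.cong refl) (simp add: product_design_def)
  also have "\<dots> = (\<Sum>i\<in>UNIV. w i * lam i) * (\<Sum>k\<in>UNIV. \<alpha> k * (hvec g k $ p * (\<Sum>q\<in>UNIV. hvec g k $ q * Y $ q $ b)))"
    by (rule sum_pd_split)
  also have "\<dots> = (\<Sum>i\<in>UNIV. w i * lam i) * (M2 g \<alpha> ** Y) $ p $ b"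
    by (simp only: M2_mm mult.assoc)
  finally show ?thesis .
qed

lemma pd_MGA:
  fixes Q1 :: "real^'a::finite^'t::finite" and K :: "real^'b::finite^'v::finite"
    and Y :: "real^'b^(unit+'v)"
  assumes a: "prob_vec \<alpha>"
    and Q1c: "\<forall>j. (\<Sum>i\<in>UNIV. Q1 $ i $ j) = 0"
    and cne: "(\<Sum>i\<in>UNIV. lam i * w i) \<noteq> 0"
    and B: "\<forall>i j. lam i * w i * B $ i $ j = Q1 $ i $ j"
    and Y: "(\<Sum>i\<in>UNIV. lam i * w i) *\<^sub>R (M2 g \<alpha> ** Y) = Q2mat K"
  shows "moment lam g (product_design w \<alpha>) ** blockdiag B Y = Amat Q1 K"
  unfolding vec_eq_iff
proof (intro allI)
  fix r s
  let ?c = "\<Sum>i\<in>UNIV. lam i * w i"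
  have sa: "(\<Sum>k\<in>UNIV. \<alpha> k) = 1" using a by (simp add: prob_vec_def)
  have Yc: "?c * (M2 g \<alpha> ** Y) $ p $ b = Q2mat K $ p $ b" for p b
  proof -
    have "((?c *\<^sub>R (M2 g \<alpha> ** Y)) $ p) $ b = Q2mat K $ p $ b" using Y by simp
    then show ?thesis by simp
  qed
  show "(moment lam g (product_design w \<alpha>) ** blockdiag B Y) $ r $ s = Amat Q1 K $ r $ s"
  proof (cases r; cases s)
    fix i' j assume [simp]: "r = Inl i'" "s = Inl j"
    have "(moment lam g (product_design w \<alpha>) ** blockdiag B Y) $ Inl i' $ Inl j = lam i' * w i' * B $ i' $ j"
      by (rule pd_LL[OF sa])
    then show ?thesis using B by (simp add: Amat_def)
  next
    fix i' b assume [simp]: "r = Inl i'" "s = Inr b"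
    have "?c * (M2 g \<alpha> ** Y) $ Inl () $ b = 0" using Yc[of "Inl ()" b] by simp
    then have "(M2 g \<alpha> ** Y) $ Inl () $ b = 0" using cne by simp
    then show ?thesis using pd_LR[of lam g w \<alpha> B Y i' b] by (simp add: Amat_def)
  next
    fix p j assume [simp]: "r = Inr p" "s = Inl j"
    have "(\<Sum>i\<in>UNIV. w i * (lam i * B $ i $ j)) = (\<Sum>i\<in>UNIV. Q1 $ i $ j)"
      using B by (intro sum.cong refl) (metis mult.assoc mult.commute)
    then show ?thesis using pd_RL[of lam g w \<alpha> B Y p j] Q1c by (simp add: Amat_def)
  next
    fix p b assume [simp]: "r = Inr p" "s = Inr b"
    have "(\<Sum>i\<in>UNIV. w i * lam i) = ?c" by (simp add: mult.commute)
    then show ?thesis using pd_RR[of lam g w \<alpha> B Y p b] Yc by (simp add: Amat_def)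
  qed
qed


lemma ginv_ex: "\<exists>G. (X::real^'n::finite^'m::finite) ** G ** X = X"
proof -
  have lf: "linear ((*v) X)" by simp
  obtain h where h: "linear h" "\<forall>v\<in>range ((*v) X). X *v (h v) = v"
    using linear_exists_right_inverse_on[OF lf subspace_UNIV] by blast
  have "X ** matrix h ** X = X"
  proof -
    have "(X ** matrix h ** X) *v x = X *v x" for x
      using h by (simp add: matrix_vector_mul_assoc[symmetric] matrix_works)
    then show ?thesis by (metis matrix_eq)
  qed
  then show ?thesis by blast
qed

lemma moment_sym: "transpose (moment lam g \<xi>) = moment lam g \<xi>"
  by (simp add: vec_eq_iff transpose_def moment_entry mult.commute)

lemma info_eq_H:
  assumes "moment lam g \<xi> ** H = A"
  shows "info_matrix lam g A \<xi> = matrix_inv (transpose H ** A)"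
proof -
  let ?M = "moment lam g \<xi>"
  define X where "X = (SOME G. gen_inverse ?M G)"
  have X: "?M ** X ** ?M = ?M"
    using someI_ex[of "\<lambda>G. gen_inverse ?M G"] ginv_ex unfolding X_def gen_inverse_def by blast
  have "transpose A ** X ** A = transpose (?M ** H) ** X ** (?M ** H)"
    using assms by simp
  also have "\<dots> = transpose H ** (?M ** X ** ?M) ** H"
    by (simp add: matrix_transpose_mul moment_sym matrix_mul_assoc)
  also have "\<dots> = transpose H ** (?M ** H)"
    by (simp add: X matrix_mul_assoc)
  also have "\<dots> = transpose H ** A" using assms by simp
  finally show ?thesis unfolding info_matrix_def X_def by simp
qed

lemma core_H:
  assumes "phi_optimal \<Phi> lam g A \<xi>s" "moment lam g \<xi>s ** H = A"
    "is_design \<xi>" "moment lam g \<xi> ** H = A"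
  shows "phi_optimal \<Phi> lam g A \<xi>"
proof -
  have "range ((*v) A) \<subseteq> range ((*v) (moment lam g \<xi>))"
  proof
    fix y assume "y \<in> range ((*v) A)"
    then obtain x where "y = A *v x" by blast
    then have "y = moment lam g \<xi> *v (H *v x)"
      by (metis assms(4) matrix_vector_mul_assoc)
    then show "y \<in> range ((*v) (moment lam g \<xi>))" by blast
  qed
  then show ?thesis using assms info_eq_H[OF assms(2)] info_eq_H[OF assms(4)]
    unfolding phi_optimal_def feasible_def by simp
qed

lemma scaleR_mm: "(c *\<^sub>R X) ** Y = c *\<^sub>R ((X::real^'n::finite^'m::finite) ** (Y::real^'p::finite^'n))"
  by (simp add: vec_eq_iff matrix_matrix_mult_def sum_distrib_left mult.assoc)

lemma diag_mult: "((\<chi> i j. if i = j then a i else 0) :: real^'n::finite^'n) ** (\<chi> i j. if i = j then b i else 0)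
   = (\<chi> i j. if i = j then a i * b i else 0)"
  unfolding vec_eq_iff
proof (intro allI)
  fix i j :: 'n
  have "(\<Sum>k\<in>UNIV. (if i = k then a i else 0) * (if k = j then b k else 0))
      = (\<Sum>k\<in>UNIV. if k = i then (if i = j then a i * b i else 0) else (0::real))"
    by (rule sum.cong) auto
  then show "((\<chi> i j. if i = j then a i else 0) ** (\<chi> i j. if i = j then b i else 0)) $ i $ j
      = (\<chi> i j. if i = j then a i * b i else 0) $ i $ j"
    by (simp add: matrix_matrix_mult_def)
qed

lemma M1_inv:
  assumes "\<forall>i. lam i * w i \<noteq> 0"
  shows "matrix_inv (M1 lam w) = (\<chi> i j. if i = j then 1 / (lam i * w i) else 0)"
proof -
  let ?D = "(\<chi> i j. if i = j then 1 / (lam i * w i) else 0) :: real^'a::finite^'a"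
  have 1: "M1 lam w ** ?D = mat 1" using assms
    unfolding M1_def diag_mult by (simp add: mat_def vec_eq_iff)
  have 2: "?D ** M1 lam w = mat 1" using assms
    unfolding M1_def diag_mult by (simp add: mat_def vec_eq_iff)
  have ex: "\<exists>A'. M1 lam w ** A' = mat 1 \<and> A' ** M1 lam w = mat 1" using 1 2 by blast
  define A' where "A' = matrix_inv (M1 lam w)"
  have A': "M1 lam w ** A' = mat 1 \<and> A' ** M1 lam w = mat 1"
    unfolding A'_def matrix_inv_def using someI_ex[OF ex] .
  have "A' = A' ** (M1 lam w ** ?D)" using 1 by simp
  also have "\<dots> = ?D" using A' by (simp add: matrix_mul_assoc)
  finally show ?thesis unfolding A'_def .
qed


lemma mm_scaleR: "(X::real^'n::finite^'m::finite) ** (c *\<^sub>R Y) = c *\<^sub>R (X ** (Y::real^'p::finite^'n))"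
  by (simp add: vec_eq_iff matrix_matrix_mult_def sum_distrib_left algebra_simps)

lemma main_gen:
  fixes lam :: "'t::finite \<Rightarrow> real"
    and g :: "'k::finite \<Rightarrow> real^'v::finite"
    and Q1 :: "real^'a::finite^'t"
    and K :: "real^'b::finite^'v"
    and \<Phi> :: "real^('a + 'b)^('a + 'b) \<Rightarrow> real"
    and wst :: "'t \<Rightarrow> real"
    and ast :: "'k \<Rightarrow> real"
  assumes lam_pos: "\<forall>i. 0 < lam i"
    and Q1_contrast: "transpose Q1 *v (1 :: real^'t) = 0"
    and Q1_nozero: "\<forall>i. row i Q1 \<noteq> 0"
    and w_prob: "prob_vec wst"
    and a_prob: "prob_vec ast"
    and opt: "phi_optimal \<Phi> lam g (Amat Q1 K) (product_design wst ast)"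
    and V: "M2 g ast ** V = Q2mat K"
    and des: "is_design \<xi>"
    and H: "moment lam g \<xi> ** blockdiag (matrix_inv (M1 lam wst) ** Q1)
              (inverse (\<Sum>i\<in>UNIV. lam i * wst i) *\<^sub>R V) = Amat Q1 K"
  shows "phi_optimal \<Phi> lam g (Amat Q1 K) \<xi>"
proof -
  let ?c = "\<Sum>i\<in>UNIV. lam i * wst i"
  have feas: "range ((*v) (Amat Q1 K)) \<subseteq> range ((*v) (moment lam g (product_design wst ast)))"
    using opt unfolding phi_optimal_def feasible_def by blast
  have wne: "wst i \<noteq> 0" for i using pd_feas_pos[OF feas a_prob] Q1_nozero by blast
  have wpos: "0 < wst i" for i using wne[of i] w_prob unfolding prob_vec_def
    by (metis less_eq_real_def)
  have lw: "\<forall>i. lam i * wst i \<noteq> 0" using wpos lam_pos by (simp add: less_imp_neq[symmetric])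
  have cpos: "0 < ?c"
    by (rule sum_pos) (use wpos lam_pos in auto)
  have Q1c: "\<forall>j. (\<Sum>i\<in>UNIV. Q1 $ i $ j) = 0"
  proof
    fix j
    have "(transpose Q1 *v (1 :: real^'t)) $ j = 0" using Q1_contrast by simp
    then show "(\<Sum>i\<in>UNIV. Q1 $ i $ j) = 0"
      by (simp add: matrix_vector_mult_def transpose_def)
  qed
  have B: "\<forall>i j. lam i * wst i * (matrix_inv (M1 lam wst) ** Q1) $ i $ j = Q1 $ i $ j"
  proof (intro allI)
    fix i j
    have "(matrix_inv (M1 lam wst) ** Q1) $ i $ j = (\<Sum>k\<in>UNIV. (if i = k then 1 / (lam i * wst i) else 0) * Q1 $ k $ j)"
      unfolding M1_inv[OF lw] by (simp add: matrix_matrix_mult_def)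
    also have "\<dots> = (\<Sum>k\<in>UNIV. if k = i then Q1 $ i $ j / (lam i * wst i) else 0)"
      by (rule sum.cong) auto
    also have "\<dots> = Q1 $ i $ j / (lam i * wst i)" by simp
    finally show "lam i * wst i * (matrix_inv (M1 lam wst) ** Q1) $ i $ j = Q1 $ i $ j"
      using lw by simp
  qed
  have Y: "?c *\<^sub>R (M2 g ast ** (inverse ?c *\<^sub>R V)) = Q2mat K"
    using cpos V by (simp add: mm_scaleR)
  have Hs: "moment lam g (product_design wst ast) ** blockdiag (matrix_inv (M1 lam wst) ** Q1)
              (inverse ?c *\<^sub>R V) = Amat Q1 K"
    by (rule pd_MGA[OF a_prob Q1c _ B Y]) (use cpos in simp)
  show ?thesis by (rule core_H[OF opt Hs des H])
qed


lemma part1: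
  fixes lam :: "'t::finite \<Rightarrow> real"
    and g :: "'k::finite \<Rightarrow> real^'v::finite"
    and Q1 :: "real^'a::finite^'t"
    and K :: "real^'b::finite^'v"
    and \<Phi> :: "real^('a + 'b)^('a + 'b) \<Rightarrow> real"
    and wst :: "'t \<Rightarrow> real"
    and ast :: "'k \<Rightarrow> real"
  assumes lam_pos: "\<forall>i. 0 < lam i"
    and Q1_contrast: "transpose Q1 *v (1 :: real^'t) = 0"
    and Q1_nozero: "\<forall>i. row i Q1 \<noteq> 0"
    and w_prob: "prob_vec wst"
    and a_prob: "prob_vec ast"
    and opt: "phi_optimal \<Phi> lam g (Amat Q1 K) (product_design wst ast)"
    and gi: "gen_inverse (M2 g ast) M2g" and des: "is_design \<xi>"
    and H: "moment lam g \<xi> ** blockdiag (matrix_inv (M1 lam wst))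
                            (inverse (\<Sum>i\<in>UNIV. lam i * wst i) *\<^sub>R M2g) ** Amat Q1 K
          = Amat Q1 K"
  shows "phi_optimal \<Phi> lam g (Amat Q1 K) \<xi>"
proof -
  have feas: "range ((*v) (Amat Q1 K)) \<subseteq> range ((*v) (moment lam g (product_design wst ast)))"
    using opt unfolding phi_optimal_def feasible_def by blast
  have V: "M2 g ast ** (M2g ** Q2mat K) = Q2mat K"
  proof -
    have "(M2 g ast ** (M2g ** Q2mat K)) *v x = Q2mat K *v x" for x
    proof -
      obtain z where z: "M2 g ast *v z = Q2mat K *v x" using pd_feas_range[OF feas a_prob] by blast
      have "(M2 g ast ** (M2g ** Q2mat K)) *v x = (M2 g ast ** M2g ** M2 g ast) *v z"
        by (simp add: matrix_vector_mul_assoc[symmetric] z)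
      also have "\<dots> = Q2mat K *v x" using gi z by (simp add: gen_inverse_def)
      finally show ?thesis .
    qed
    then show ?thesis by (metis matrix_eq)
  qed
  have H': "moment lam g \<xi> ** blockdiag (matrix_inv (M1 lam wst) ** Q1)
              (inverse (\<Sum>i\<in>UNIV. lam i * wst i) *\<^sub>R (M2g ** Q2mat K)) = Amat Q1 K"
    using H by (simp add: matrix_mul_assoc[symmetric] Amat_def blockdiag_mult scaleR_mm)
  show ?thesis by (rule main_gen[OF lam_pos Q1_contrast Q1_nozero w_prob a_prob opt V des H'])
qed


lemma lin_swap: "(\<Sum>k\<in>UNIV. a k * (\<Sum>l\<in>UNIV. f k l * v l)) = (\<Sum>l\<in>UNIV. (\<Sum>k\<in>UNIV. a k * f k l) * (v l::real))"
proof -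
  have "(\<Sum>k\<in>UNIV. a k * (\<Sum>l\<in>UNIV. f k l * v l)) = (\<Sum>k\<in>UNIV. \<Sum>l\<in>UNIV. a k * f k l * v l)"
    by (simp add: sum_distrib_left mult.assoc)
  also have "\<dots> = (\<Sum>l\<in>UNIV. \<Sum>k\<in>UNIV. a k * f k l * v l)" by (rule sum.swap)
  also have "\<dots> = (\<Sum>l\<in>UNIV. (\<Sum>k\<in>UNIV. a k * f k l) * v l)" by (simp add: sum_distrib_right)
  finally show ?thesis .
qed

lemma gb_comp: "(\<Sum>k\<in>UNIV. a k *\<^sub>R g k) $ l = (\<Sum>k\<in>UNIV. a k * g k $ l)"
  by (simp add: sum_component)

lemma Smat_entry: "Smat g a $ l $ l' = (\<Sum>k\<in>UNIV. a k * (g k $ l * g k $ l'))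
    - (\<Sum>k\<in>UNIV. a k *\<^sub>R g k) $ l * (\<Sum>k\<in>UNIV. a k *\<^sub>R g k) $ l'"
  by (simp add: Smat_def outer_def sum_component)

lemma lin_swap2: "(\<Sum>l\<in>UNIV. (\<Sum>k\<in>UNIV. a k * (b k * f k l)) * v l) = (\<Sum>k\<in>UNIV. a k * b k * (\<Sum>l\<in>UNIV. f k l * (v l::real)))"
proof -
  have "(\<Sum>l\<in>UNIV. (\<Sum>k\<in>UNIV. a k * (b k * f k l)) * v l) = (\<Sum>l\<in>UNIV. \<Sum>k\<in>UNIV. a k * b k * (f k l * v l))"
    by (simp add: sum_distrib_right mult.assoc)
  also have "\<dots> = (\<Sum>k\<in>UNIV. \<Sum>l\<in>UNIV. a k * b k * (f k l * v l))" by (rule sum.swap)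
  also have "\<dots> = (\<Sum>k\<in>UNIV. a k * b k * (\<Sum>l\<in>UNIV. f k l * v l))" by (simp add: sum_distrib_left)
  finally show ?thesis .
qed

lemma Smat_mv: "(Smat g a *v v) $ l = (\<Sum>k\<in>UNIV. a k * g k $ l * (\<Sum>l'\<in>UNIV. g k $ l' * v $ l'))
    - (\<Sum>k\<in>UNIV. a k *\<^sub>R g k) $ l * (\<Sum>l'\<in>UNIV. (\<Sum>k\<in>UNIV. a k *\<^sub>R g k) $ l' * v $ l')"
proof -
  have "(Smat g a *v v) $ l = (\<Sum>l'\<in>UNIV. ((\<Sum>k\<in>UNIV. a k * (g k $ l * g k $ l'))
    - (\<Sum>k\<in>UNIV. a k *\<^sub>R g k) $ l * (\<Sum>k\<in>UNIV. a k *\<^sub>R g k) $ l') * v $ l')"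
    by (simp only: matrix_vector_mult_def vec_lambda_beta Smat_entry)
  also have "\<dots> = (\<Sum>l'\<in>UNIV. (\<Sum>k\<in>UNIV. a k * (g k $ l * g k $ l')) * v $ l')
    - (\<Sum>k\<in>UNIV. a k *\<^sub>R g k) $ l * (\<Sum>l'\<in>UNIV. (\<Sum>k\<in>UNIV. a k *\<^sub>R g k) $ l' * v $ l')"
    by (simp only: left_diff_distrib sum_subtractf sum_distrib_left mult.assoc)
  also have "(\<Sum>l'\<in>UNIV. (\<Sum>k\<in>UNIV. a k * (g k $ l * g k $ l')) * v $ l')
      = (\<Sum>k\<in>UNIV. a k * g k $ l * (\<Sum>l'\<in>UNIV. g k $ l' * v $ l'))"
    by (rule lin_swap2)
  finally show ?thesis .
qed

lemma hdot: "(\<Sum>q\<in>UNIV. hvec g k $ q * z $ q) = z $ Inl () + (\<Sum>l\<in>UNIV. g k $ l * z $ Inr l)"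
  by (simp add: sum_UNIV_plus)

lemma K_range:
  fixes K :: "real^'b::finite^'v::finite" and g :: "'k::finite \<Rightarrow> real^'v" and x :: "real^'b"
  assumes a: "prob_vec ast" and z: "M2 g ast *v z = Q2mat K *v x"
  shows "Smat g ast *v (\<chi> l. z $ Inr l) = K *v x"
proof -
  define z' where "z' = (\<chi> l. z $ Inr l)"
  define z0 where "z0 = z $ Inl ()"
  define gb where "gb = (\<Sum>k\<in>UNIV. ast k *\<^sub>R g k)"
  define gz where "gz k = (\<Sum>l\<in>UNIV. g k $ l * z' $ l)" for k
  define gbz where "gbz = (\<Sum>l\<in>UNIV. gb $ l * z' $ l)"
  have sa: "(\<Sum>k\<in>UNIV. ast k) = 1" using a by (simp add: prob_vec_def)
  have hz: "(\<Sum>q\<in>UNIV. hvec g k $ q * z $ q) = z0 + gz k" for k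
    by (simp add: hdot z0_def gz_def z'_def)
  have I1: "(\<Sum>k\<in>UNIV. ast k * gz k) = gbz"
    unfolding gz_def gbz_def lin_swap gb_def gb_comp ..
  have E0: "(\<Sum>k\<in>UNIV. ast k * (z0 + gz k)) = 0"
  proof -
    have "(M2 g ast *v z) $ Inl () = 0" using z by (simp add: matrix_vector_mult_def)
    then show ?thesis by (simp add: M2_mv hz)
  qed
  have z0: "z0 = - gbz"
  proof -
    have "(\<Sum>k\<in>UNIV. ast k * (z0 + gz k)) = z0 * (\<Sum>k\<in>UNIV. ast k) + (\<Sum>k\<in>UNIV. ast k * gz k)"
      by (simp add: distrib_left sum.distrib sum_distrib_left mult.commute)
    then show ?thesis using E0 sa I1 by simp
  qed
  have "(Smat g ast *v z') $ l = (K *v x) $ l" for l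
  proof -
    have E1: "(\<Sum>k\<in>UNIV. ast k * g k $ l * (z0 + gz k)) = (K *v x) $ l"
    proof -
      have "(M2 g ast *v z) $ Inr l = (K *v x) $ l" using z by (simp add: matrix_vector_mult_def)
      then show ?thesis by (simp add: M2_mv hz)
    qed
    have "(\<Sum>k\<in>UNIV. ast k * g k $ l * (z0 + gz k)) = z0 * (\<Sum>k\<in>UNIV. ast k * g k $ l) + (\<Sum>k\<in>UNIV. ast k * g k $ l * gz k)"
      by (simp add: distrib_left sum.distrib sum_distrib_left mult.commute mult.left_commute)
    also have "\<dots> = (Smat g ast *v z') $ l"
      by (simp add: Smat_mv gz_def gbz_def z0 gb_def gb_comp)
    finally show ?thesis using E1 by simp
  qed
  then show ?thesis unfolding z'_def by (simp add: vec_eq_iff)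
qed


definition V2 :: "('k::finite \<Rightarrow> real^'v::finite) \<Rightarrow> ('k \<Rightarrow> real) \<Rightarrow> real^'b::finite^'v \<Rightarrow> real^'b^(unit+'v)" where
  "V2 g a u = (\<chi> p b. case p of Inl _ \<Rightarrow> - (\<Sum>l\<in>UNIV. (\<Sum>k\<in>UNIV. a k *\<^sub>R g k) $ l * u $ l $ b) | Inr l \<Rightarrow> u $ l $ b)"

lemma V2_phi: "(\<Sum>q\<in>UNIV. hvec g k $ q * V2 g a u $ q $ b)
   = (\<Sum>l\<in>UNIV. (g k $ l - (\<Sum>k\<in>UNIV. a k *\<^sub>R g k) $ l) * u $ l $ b)"
  by (simp only: sum_UNIV_plus sum_unit hvec_Inl hvec_Inr V2_def vec_lambda_beta sum.case
      left_diff_distrib sum_subtractf mult_1_left)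

lemma mm_column: "(A ** B) $ i $ j = (A *v column j B) $ i"
  by (simp add: matrix_matrix_mult_def matrix_vector_mult_def column_def)

lemma M2_V2:
  assumes a: "prob_vec ast" and SK: "Smat g ast ** Sg ** K = K"
  shows "M2 g ast ** V2 g ast (Sg ** K) = Q2mat K"
  unfolding vec_eq_iff
proof (intro allI)
  fix p b
  define gb where "gb = (\<Sum>k\<in>UNIV. ast k *\<^sub>R g k)"
  define u where "u = Sg ** K"
  have sa: "(\<Sum>k\<in>UNIV. ast k) = 1" using a by (simp add: prob_vec_def)
  have gbc: "gb $ l = (\<Sum>k\<in>UNIV. ast k * g k $ l)" for l unfolding gb_def by (rule gb_comp)
  have e: "(M2 g ast ** V2 g ast u) $ p $ b = (\<Sum>k\<in>UNIV. ast k * hvec g k $ p * (\<Sum>l\<in>UNIV. (g k $ l - gb $ l) * u $ l $ b))"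
    unfolding M2_mm V2_phi gb_def ..
  show "(M2 g ast ** V2 g ast (Sg ** K)) $ p $ b = Q2mat K $ p $ b"
  proof (cases p)
    case (Inl uu)
    have "(\<Sum>k\<in>UNIV. ast k * (\<Sum>l\<in>UNIV. (g k $ l - gb $ l) * u $ l $ b))
        = (\<Sum>l\<in>UNIV. (\<Sum>k\<in>UNIV. ast k * (g k $ l - gb $ l)) * u $ l $ b)" by (rule lin_swap)
    also have "\<dots> = 0"
    proof -
      have "(\<Sum>k\<in>UNIV. ast k * (g k $ l - gb $ l)) = 0" for l
        by (simp add: right_diff_distrib sum_subtractf sum_distrib_right[symmetric] sa gbc)
      then show ?thesis by simp
    qed
    finally show ?thesis using e Inl by (simp add: u_def)
  next
    case (Inr l)
    have "(\<Sum>k\<in>UNIV. ast k * g k $ l * (\<Sum>l'\<in>UNIV. (g k $ l' - gb $ l') * u $ l' $ b))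
       = (\<Sum>k\<in>UNIV. ast k * g k $ l * (\<Sum>l'\<in>UNIV. g k $ l' * u $ l' $ b))
         - (\<Sum>k\<in>UNIV. ast k * g k $ l) * (\<Sum>l'\<in>UNIV. gb $ l' * u $ l' $ b)"
      by (simp add: left_diff_distrib right_diff_distrib sum_subtractf sum_distrib_right)
    also have "\<dots> = (Smat g ast *v column b u) $ l"
      unfolding Smat_mv gbc[symmetric] gb_def by (simp add: column_def)
    also have "\<dots> = K $ l $ b" using SK by (simp add: u_def mm_column[symmetric] matrix_mul_assoc)
    finally show ?thesis using e Inr by (simp add: u_def)
  qed
qed


lemma gen_LL: "(moment lam g \<xi> ** blockdiag B Y) $ Inl i' $ Inl j = (\<Sum>k\<in>UNIV. \<xi> i' k * lam i' * B $ i' $ j)"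
  unfolding moment_mm_bd fvec_Inl by (simp only: sum.case delta_sum2)

lemma gen_LR: "(moment lam g \<xi> ** blockdiag B Y) $ Inl i' $ Inr b
   = (\<Sum>k\<in>UNIV. \<xi> i' k * lam i' * (\<Sum>p\<in>UNIV. hvec g k $ p * Y $ p $ b))"
  unfolding moment_mm_bd fvec_Inl by (simp only: sum.case delta_sum2)

lemma gen_RL: "(moment lam g \<xi> ** blockdiag B Y) $ Inr p $ Inl j
   = (\<Sum>i\<in>UNIV. \<Sum>k\<in>UNIV. \<xi> i k * lam i * hvec g k $ p * B $ i $ j)"
  unfolding moment_mm_bd fvec_Inr by (simp only: sum.case)

lemma gen_RR: "(moment lam g \<xi> ** blockdiag B Y) $ Inr p $ Inr b
   = (\<Sum>i\<in>UNIV. \<Sum>k\<in>UNIV. \<xi> i k * lam i * hvec g k $ p * (\<Sum>q\<in>UNIV. hvec g k $ q * Y $ q $ b))"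
  unfolding moment_mm_bd fvec_Inr by (simp only: sum.case)

lemma hY: "(\<Sum>q\<in>UNIV. hvec g k $ q * (c *\<^sub>R V2 g a u) $ q $ b)
   = c * (\<Sum>l\<in>UNIV. (g k $ l - (\<Sum>k\<in>UNIV. a k *\<^sub>R g k) $ l) * u $ l $ b)"
proof -
  have "(\<Sum>q\<in>UNIV. hvec g k $ q * (c *\<^sub>R V2 g a u) $ q $ b) = c * (\<Sum>q\<in>UNIV. hvec g k $ q * V2 g a u $ q $ b)"
    by (simp add: sum_distrib_left mult.left_commute)
  then show ?thesis by (simp only: V2_phi)
qed

lemma C0:
  fixes \<xi> :: "'t::finite \<Rightarrow> 'k::finite \<Rightarrow> real" and g :: "'k \<Rightarrow> real^'v::finite"
    and Sg :: "real^'v^'v" and K :: "real^'b::finite^'v"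
  assumes wa: "\<forall>i. (\<Sum>k\<in>UNIV. \<xi> i k) = wst i"
    and cc: "(\<chi> i l. \<Sum>k\<in>UNIV. (\<xi> i k - wst i * ast k) * g k $ l) ** Sg ** K = (0 :: real^'b^'t)"
  shows "(\<Sum>k\<in>UNIV. \<xi> i k * (\<Sum>l\<in>UNIV. (g k $ l - (\<Sum>k\<in>UNIV. ast k *\<^sub>R g k) $ l) * (Sg ** K) $ l $ b)) = 0"
proof -
  define gb where "gb = (\<Sum>k\<in>UNIV. ast k *\<^sub>R g k)"
  define u where "u = Sg ** K"
  have gbc: "gb $ l = (\<Sum>k\<in>UNIV. ast k * g k $ l)" for l unfolding gb_def by (rule gb_comp)
  have "(\<Sum>k\<in>UNIV. \<xi> i k * (\<Sum>l\<in>UNIV. (g k $ l - gb $ l) * u $ l $ b))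
      = (\<Sum>l\<in>UNIV. (\<Sum>k\<in>UNIV. \<xi> i k * (g k $ l - gb $ l)) * u $ l $ b)" by (rule lin_swap)
  also have "\<dots> = (\<Sum>l\<in>UNIV. (\<Sum>k\<in>UNIV. (\<xi> i k - wst i * ast k) * g k $ l) * u $ l $ b)"
  proof (rule sum.cong[OF refl])
    fix l
    have "(\<Sum>k\<in>UNIV. \<xi> i k * (g k $ l - gb $ l)) = (\<Sum>k\<in>UNIV. \<xi> i k * g k $ l) - wst i * gb $ l"
      using wa by (simp add: right_diff_distrib sum_subtractf sum_distrib_right[symmetric])
    also have "\<dots> = (\<Sum>k\<in>UNIV. (\<xi> i k - wst i * ast k) * g k $ l)"
      by (simp add: gbc left_diff_distrib sum_subtractf sum_distrib_left mult.assoc)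
    finally show "(\<Sum>k\<in>UNIV. \<xi> i k * (g k $ l - gb $ l)) * u $ l $ b = (\<Sum>k\<in>UNIV. (\<xi> i k - wst i * ast k) * g k $ l) * u $ l $ b"
      by simp
  qed
  also have "\<dots> = ((\<chi> i l. \<Sum>k\<in>UNIV. (\<xi> i k - wst i * ast k) * g k $ l) ** u) $ i $ b"
    by (simp add: matrix_matrix_mult_def)
  also have "\<dots> = 0" using cc by (simp add: u_def matrix_mul_assoc)
  finally show ?thesis unfolding gb_def u_def .
qed


lemma D_lemma:
  fixes \<xi> :: "'t::finite \<Rightarrow> 'k::finite \<Rightarrow> real" and g :: "'k \<Rightarrow> real^'v::finite"
    and Sg :: "real^'v^'v" and K :: "real^'b::finite^'v"
  assumes cd: "(inverse c *\<^sub>R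
           ((\<Sum>i\<in>UNIV. \<Sum>k\<in>UNIV. (lam i * \<xi> i k) *\<^sub>R outer (g k) (g k))
            - outer (\<Sum>i\<in>UNIV. \<Sum>k\<in>UNIV. (lam i * \<xi> i k) *\<^sub>R g k)
                    (\<Sum>k\<in>UNIV. ast k *\<^sub>R g k))) ** Sg ** K = K"
  shows "inverse c * (\<Sum>i\<in>UNIV. \<Sum>k\<in>UNIV. \<xi> i k * lam i * g k $ l *
     (\<Sum>l'\<in>UNIV. (g k $ l' - (\<Sum>k\<in>UNIV. ast k *\<^sub>R g k) $ l') * (Sg ** K) $ l' $ b)) = K $ l $ b"
proof -
  define gb where "gb = (\<Sum>k\<in>UNIV. ast k *\<^sub>R g k)"
  define u where "u = Sg ** K"
  define W where "W = (\<Sum>i\<in>UNIV. \<Sum>k\<in>UNIV. (lam i * \<xi> i k) *\<^sub>R outer (g k) (g k))"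
  define U where "U = (\<Sum>i\<in>UNIV. \<Sum>k\<in>UNIV. (lam i * \<xi> i k) *\<^sub>R g k)"
  have Wc: "W $ l $ l' = (\<Sum>i\<in>UNIV. \<Sum>k\<in>UNIV. lam i * \<xi> i k * (g k $ l * g k $ l'))" for l l'
    by (simp add: W_def outer_def sum_component)
  have Uc: "U $ l = (\<Sum>i\<in>UNIV. \<Sum>k\<in>UNIV. lam i * \<xi> i k * g k $ l)" for l
    by (simp add: U_def sum_component)
  have "(\<Sum>i\<in>UNIV. \<Sum>k\<in>UNIV. \<xi> i k * lam i * g k $ l * (\<Sum>l'\<in>UNIV. (g k $ l' - gb $ l') * u $ l' $ b))
      = (\<Sum>i\<in>UNIV. \<Sum>l'\<in>UNIV. (\<Sum>k\<in>UNIV. \<xi> i k * lam i * g k $ l * (g k $ l' - gb $ l')) * u $ l' $ b)"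
    by (rule sum.cong[OF refl], rule lin_swap)
  also have "\<dots> = (\<Sum>l'\<in>UNIV. \<Sum>i\<in>UNIV. (\<Sum>k\<in>UNIV. \<xi> i k * lam i * g k $ l * (g k $ l' - gb $ l')) * u $ l' $ b)"
    by (rule sum.swap)
  also have "\<dots> = (\<Sum>l'\<in>UNIV. (W $ l $ l' - U $ l * gb $ l') * u $ l' $ b)"
  proof (rule sum.cong[OF refl])
    fix l'
    have "(\<Sum>i\<in>UNIV. \<Sum>k\<in>UNIV. \<xi> i k * lam i * g k $ l * (g k $ l' - gb $ l'))
       = (\<Sum>i\<in>UNIV. \<Sum>k\<in>UNIV. lam i * \<xi> i k * (g k $ l * g k $ l')) - (\<Sum>i\<in>UNIV. \<Sum>k\<in>UNIV. lam i * \<xi> i k * g k $ l) * gb $ l'"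
      by (simp add: right_diff_distrib sum_subtractf sum_distrib_right sum_distrib_left algebra_simps)
    then show "(\<Sum>i\<in>UNIV. (\<Sum>k\<in>UNIV. \<xi> i k * lam i * g k $ l * (g k $ l' - gb $ l')) * u $ l' $ b)
        = (W $ l $ l' - U $ l * gb $ l') * u $ l' $ b"
      by (simp add: Wc Uc sum_distrib_right[symmetric])
  qed
  also have "\<dots> = ((W - outer U gb) ** u) $ l $ b"
    by (simp add: matrix_matrix_mult_def outer_def)
  finally have "inverse c * (\<Sum>i\<in>UNIV. \<Sum>k\<in>UNIV. \<xi> i k * lam i * g k $ l * (\<Sum>l'\<in>UNIV. (g k $ l' - gb $ l') * u $ l' $ b))
     = ((inverse c *\<^sub>R (W - outer U gb)) ** u) $ l $ b"
    by (simp add: scaleR_mm)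
  also have "\<dots> = K $ l $ b" using cd by (simp add: u_def W_def U_def gb_def matrix_mul_assoc)
  finally show ?thesis unfolding gb_def u_def .
qed


lemma part2:
  fixes lam :: "'t::finite \<Rightarrow> real"
    and g :: "'k::finite \<Rightarrow> real^'v::finite"
    and Q1 :: "real^'a::finite^'t"
    and K :: "real^'b::finite^'v"
    and \<Phi> :: "real^('a + 'b)^('a + 'b) \<Rightarrow> real"
    and wst :: "'t \<Rightarrow> real"
    and ast :: "'k \<Rightarrow> real"
  assumes lam_pos: "\<forall>i. 0 < lam i"
    and Q1_contrast: "transpose Q1 *v (1 :: real^'t) = 0"
    and Q1_nozero: "\<forall>i. row i Q1 \<noteq> 0"
    and w_prob: "prob_vec wst"
    and a_prob: "prob_vec ast"
    and opt: "phi_optimal \<Phi> lam g (Amat Q1 K) (product_design wst ast)"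
    and gi: "gen_inverse (Smat g ast) Sg" and des: "is_design \<xi>"
    and wa: "\<forall>i. (\<Sum>k\<in>UNIV. \<xi> i k) = wst i"
    and cb: "(\<chi> l i. (1 / wst i) * (\<Sum>k\<in>UNIV. \<xi> i k * g k $ l)) ** Q1 = (0 :: real^'a^'v)"
    and cc: "(\<chi> i l. \<Sum>k\<in>UNIV. (\<xi> i k - wst i * ast k) * g k $ l) ** Sg ** K = (0 :: real^'b^'t)"
    and cd: "(inverse (\<Sum>i\<in>UNIV. lam i * wst i) *\<^sub>R
           ((\<Sum>i\<in>UNIV. \<Sum>k\<in>UNIV. (lam i * \<xi> i k) *\<^sub>R outer (g k) (g k))
            - outer (\<Sum>i\<in>UNIV. \<Sum>k\<in>UNIV. (lam i * \<xi> i k) *\<^sub>R g k)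
                    (\<Sum>k\<in>UNIV. ast k *\<^sub>R g k))) ** Sg ** K = K"
  shows "phi_optimal \<Phi> lam g (Amat Q1 K) \<xi>"
proof -
  let ?c = "\<Sum>i\<in>UNIV. lam i * wst i"
  have feas: "range ((*v) (Amat Q1 K)) \<subseteq> range ((*v) (moment lam g (product_design wst ast)))"
    using opt unfolding phi_optimal_def feasible_def by blast
  have wne: "wst i \<noteq> 0" for i using pd_feas_pos[OF feas a_prob] Q1_nozero by blast
  have wpos: "0 < wst i" for i using wne[of i] w_prob unfolding prob_vec_def
    by (metis less_eq_real_def)
  have lw: "\<forall>i. lam i * wst i \<noteq> 0" using wpos lam_pos by (simp add: less_imp_neq[symmetric])
  have cpos: "0 < ?c"
    by (rule sum_pos) (use wpos lam_pos in auto)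
  have Q1c: "(\<Sum>i\<in>UNIV. Q1 $ i $ j) = 0" for j
  proof -
    have "(transpose Q1 *v (1 :: real^'t)) $ j = 0" using Q1_contrast by simp
    then show "(\<Sum>i\<in>UNIV. Q1 $ i $ j) = 0"
      by (simp add: matrix_vector_mult_def transpose_def)
  qed
  define Bm where "Bm = matrix_inv (M1 lam wst) ** Q1"
  have B: "lam i * Bm $ i $ j = Q1 $ i $ j / wst i" for i j
  proof -
    have "Bm $ i $ j = (\<Sum>k\<in>UNIV. (if i = k then 1 / (lam i * wst i) else 0) * Q1 $ k $ j)"
      unfolding Bm_def M1_inv[OF lw] by (simp add: matrix_matrix_mult_def)
    also have "\<dots> = (\<Sum>k\<in>UNIV. if k = i then Q1 $ i $ j / (lam i * wst i) else 0)"
      by (rule sum.cong) auto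
    also have "\<dots> = Q1 $ i $ j / (lam i * wst i)" by simp
    finally show ?thesis using lw by (simp add: field_simps)
  qed
  have SK: "Smat g ast ** Sg ** K = K"
  proof -
    have "(Smat g ast ** Sg ** K) *v x = K *v x" for x
    proof -
      obtain z where z: "M2 g ast *v z = Q2mat K *v x" using pd_feas_range[OF feas a_prob] by blast
      have z': "Smat g ast *v (\<chi> l. z $ Inr l) = K *v x" by (rule K_range[OF a_prob z])
      have "(Smat g ast ** Sg ** K) *v x = (Smat g ast ** Sg ** Smat g ast) *v (\<chi> l. z $ Inr l)"
        by (simp add: matrix_vector_mul_assoc[symmetric] z')
      also have "\<dots> = K *v x" using gi z' by (simp add: gen_inverse_def)
      finally show ?thesis .
    qed
    then show ?thesis by (metis matrix_eq)
  qed
  define u where "u = Sg ** K"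
  define gb where "gb = (\<Sum>k\<in>UNIV. ast k *\<^sub>R g k)"
  define phi where "phi k b = (\<Sum>l\<in>UNIV. (g k $ l - gb $ l) * u $ l $ b)" for k b
  have V: "M2 g ast ** V2 g ast u = Q2mat K" unfolding u_def by (rule M2_V2[OF a_prob SK])
  have hY': "(\<Sum>q\<in>UNIV. hvec g k $ q * (inverse ?c *\<^sub>R V2 g ast u) $ q $ b) = inverse ?c * phi k b" for k b
    unfolding hY phi_def gb_def ..
  have C0': "(\<Sum>k\<in>UNIV. \<xi> i k * phi k b) = 0" for i b
    unfolding phi_def gb_def u_def by (rule C0[OF wa cc])
  have D': "inverse ?c * (\<Sum>i\<in>UNIV. \<Sum>k\<in>UNIV. \<xi> i k * lam i * g k $ l * phi k b) = K $ l $ b" for l b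
    unfolding phi_def gb_def u_def by (rule D_lemma[OF cd])
  have H: "moment lam g \<xi> ** blockdiag Bm (inverse ?c *\<^sub>R V2 g ast u) = Amat Q1 K"
    unfolding vec_eq_iff
  proof (intro allI)
    fix r s
    show "(moment lam g \<xi> ** blockdiag Bm (inverse ?c *\<^sub>R V2 g ast u)) $ r $ s = Amat Q1 K $ r $ s"
    proof (cases r; cases s)
      fix i' j assume [simp]: "r = Inl i'" "s = Inl j"
      have "(\<Sum>k\<in>UNIV. \<xi> i' k * lam i' * Bm $ i' $ j) = (\<Sum>k\<in>UNIV. \<xi> i' k) * (lam i' * Bm $ i' $ j)"
        by (simp add: sum_distrib_right mult.assoc)
      also have "\<dots> = Q1 $ i' $ j" using wa B[of i' j] wne[of i'] by simp
      finally show ?thesis by (simp add: gen_LL Amat_def)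
    next
      fix i' b assume [simp]: "r = Inl i'" "s = Inr b"
      have "(\<Sum>k\<in>UNIV. \<xi> i' k * lam i' * (inverse ?c * phi k b)) = lam i' * inverse ?c * (\<Sum>k\<in>UNIV. \<xi> i' k * phi k b)"
        by (simp add: sum_distrib_left algebra_simps)
      also have "\<dots> = 0" by (simp add: C0')
      moreover have "(moment lam g \<xi> ** blockdiag Bm (inverse ?c *\<^sub>R V2 g ast u)) $ Inl i' $ Inr b
          = (\<Sum>k\<in>UNIV. \<xi> i' k * lam i' * (inverse ?c * phi k b))"
        unfolding gen_LR hY' ..
      ultimately show ?thesis by (simp add: Amat_def)
    next
      fix p j assume [simp]: "r = Inr p" "s = Inl j"
      have "(\<Sum>i\<in>UNIV. \<Sum>k\<in>UNIV. \<xi> i k * lam i * hvec g k $ p * Bm $ i $ j) = 0"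
      proof (cases p)
        case (Inl uu)
        have "(\<Sum>i\<in>UNIV. \<Sum>k\<in>UNIV. \<xi> i k * lam i * hvec g k $ p * Bm $ i $ j)
            = (\<Sum>i\<in>UNIV. (\<Sum>k\<in>UNIV. \<xi> i k) * (lam i * Bm $ i $ j))"
          by (simp add: Inl sum_distrib_right mult.assoc)
        also have "\<dots> = (\<Sum>i\<in>UNIV. Q1 $ i $ j)" using wa B wne by simp
        also have "\<dots> = 0" by (rule Q1c)
        finally show ?thesis .
      next
        case (Inr l)
        have "(\<Sum>i\<in>UNIV. \<Sum>k\<in>UNIV. \<xi> i k * lam i * hvec g k $ p * Bm $ i $ j)
            = (\<Sum>i\<in>UNIV. (\<Sum>k\<in>UNIV. \<xi> i k * g k $ l) * (lam i * Bm $ i $ j))"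
        proof (rule sum.cong[OF refl])
          fix i
          have "(\<Sum>k\<in>UNIV. \<xi> i k * lam i * hvec g k $ p * Bm $ i $ j) = (\<Sum>k\<in>UNIV. (\<xi> i k * g k $ l) * (lam i * Bm $ i $ j))"
            by (intro sum.cong refl) (simp add: Inr algebra_simps)
          also have "\<dots> = (\<Sum>k\<in>UNIV. \<xi> i k * g k $ l) * (lam i * Bm $ i $ j)"
            by (rule sum_distrib_right[symmetric])
          finally show "(\<Sum>k\<in>UNIV. \<xi> i k * lam i * hvec g k $ p * Bm $ i $ j) = (\<Sum>k\<in>UNIV. \<xi> i k * g k $ l) * (lam i * Bm $ i $ j)" .
        qed
        also have "\<dots> = (\<Sum>i\<in>UNIV. (1 / wst i) * (\<Sum>k\<in>UNIV. \<xi> i k * g k $ l) * Q1 $ i $ j)"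
          by (rule sum.cong[OF refl]) (simp add: B)
        also have "\<dots> = ((\<chi> l i. (1 / wst i) * (\<Sum>k\<in>UNIV. \<xi> i k * g k $ l)) ** Q1) $ l $ j"
          by (simp add: matrix_matrix_mult_def)
        also have "\<dots> = 0" using cb by simp
        finally show ?thesis .
      qed
      then show ?thesis by (simp add: gen_RL Amat_def)
    next
      fix p b assume [simp]: "r = Inr p" "s = Inr b"
      have e0: "(moment lam g \<xi> ** blockdiag Bm (inverse ?c *\<^sub>R V2 g ast u)) $ Inr p $ Inr b
         = (\<Sum>i\<in>UNIV. \<Sum>k\<in>UNIV. \<xi> i k * lam i * hvec g k $ p * (inverse ?c * phi k b))"
        unfolding gen_RR hY' ..
      have e: "(moment lam g \<xi> ** blockdiag Bm (inverse ?c *\<^sub>R V2 g ast u)) $ r $ s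
         = inverse ?c * (\<Sum>i\<in>UNIV. \<Sum>k\<in>UNIV. \<xi> i k * lam i * hvec g k $ p * phi k b)"
        using e0 by (simp add: sum_distrib_left algebra_simps)
      show ?thesis
      proof (cases p)
        case (Inl uu)
        have "(\<Sum>i\<in>UNIV. \<Sum>k\<in>UNIV. \<xi> i k * lam i * hvec g k $ p * phi k b)
            = (\<Sum>i\<in>UNIV. lam i * (\<Sum>k\<in>UNIV. \<xi> i k * phi k b))"
          by (simp add: Inl sum_distrib_left algebra_simps)
        also have "\<dots> = 0" by (simp add: C0')
        finally show ?thesis using e by (simp add: Amat_def Inl)
      next
        case (Inr l)
        show ?thesis using e D'[of l b] by (simp add: Amat_def Inr)
      qed
    qed
  qed
  show ?thesis
    by (rule main_gen[OF lam_pos Q1_contrast Q1_nozero w_prob a_prob opt V des H[unfolded Bm_def]])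
qed

theorem theorem3:
  fixes lam :: "'t::finite \<Rightarrow> real"
    and g :: "'k::finite \<Rightarrow> real^'v::finite"
    and Q1 :: "real^'a::finite^'t"
    and K :: "real^'b::finite^'v"
    and \<Phi> :: "real^('a + 'b)^('a + 'b) \<Rightarrow> real"
    and wst :: "'t \<Rightarrow> real"
    and ast :: "'k \<Rightarrow> real"
  assumes lam_pos: "\<forall>i. 0 < lam i"
    and Q1_rank: "full_col_rank Q1"
    and Q1_contrast: "transpose Q1 *v (1 :: real^'t) = 0"
    and Q1_nozero: "\<forall>i. row i Q1 \<noteq> 0"
    and K_rank: "full_col_rank K"
    and Phi_info: "information_function \<Phi>"
    and Phi_eig: "eigenvalue_based \<Phi>"
    and w_prob: "prob_vec wst"
    and a_prob: "prob_vec ast"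
    and opt: "phi_optimal \<Phi> lam g (Amat Q1 K) (product_design wst ast)"
  shows
    "(\<forall>M2g \<xi>. gen_inverse (M2 g ast) M2g \<and> is_design \<xi> \<and>
        moment lam g \<xi> ** blockdiag (matrix_inv (M1 lam wst))
                            (inverse (\<Sum>i\<in>UNIV. lam i * wst i) *\<^sub>R M2g) ** Amat Q1 K
          = Amat Q1 K
      \<longrightarrow> phi_optimal \<Phi> lam g (Amat Q1 K) \<xi>)
   \<and>
    (\<forall>Sg \<xi>. gen_inverse (Smat g ast) Sg \<and> is_design \<xi> \<and>
        (\<forall>i. (\<Sum>k\<in>UNIV. \<xi> i k) = wst i) \<and>
        (\<chi> l i. (1 / wst i) * (\<Sum>k\<in>UNIV. \<xi> i k * g k $ l)) ** Q1 = (0 :: real^'a^'v) \<and>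
        (\<chi> i l. \<Sum>k\<in>UNIV. (\<xi> i k - wst i * ast k) * g k $ l) ** Sg ** K = (0 :: real^'b^'t) \<and>
        (inverse (\<Sum>i\<in>UNIV. lam i * wst i) *\<^sub>R
           ((\<Sum>i\<in>UNIV. \<Sum>k\<in>UNIV. (lam i * \<xi> i k) *\<^sub>R outer (g k) (g k))
            - outer (\<Sum>i\<in>UNIV. \<Sum>k\<in>UNIV. (lam i * \<xi> i k) *\<^sub>R g k)
                    (\<Sum>k\<in>UNIV. ast k *\<^sub>R g k))) ** Sg ** K = K
      \<longrightarrow> phi_optimal \<Phi> lam g (Amat Q1 K) \<xi>)"
proof (intro conjI allI impI)
  fix M2g \<xi>
  assume h: "gen_inverse (M2 g ast) M2g \<and> is_design \<xi> \<and>
        moment lam g \<xi> ** blockdiag (matrix_inv (M1 lam wst))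
                            (inverse (\<Sum>i\<in>UNIV. lam i * wst i) *\<^sub>R M2g) ** Amat Q1 K
          = Amat Q1 K"
  show "phi_optimal \<Phi> lam g (Amat Q1 K) \<xi>"
    using part1[OF lam_pos Q1_contrast Q1_nozero w_prob a_prob opt] h by blast
next
  fix Sg \<xi>
  assume h: "gen_inverse (Smat g ast) Sg \<and> is_design \<xi> \<and>
        (\<forall>i. (\<Sum>k\<in>UNIV. \<xi> i k) = wst i) \<and>
        (\<chi> l i. (1 / wst i) * (\<Sum>k\<in>UNIV. \<xi> i k * g k $ l)) ** Q1 = (0 :: real^'a^'v) \<and>
        (\<chi> i l. \<Sum>k\<in>UNIV. (\<xi> i k - wst i * ast k) * g k $ l) ** Sg ** K = (0 :: real^'b^'t) \<and>
        (inverse (\<Sum>i\<in>UNIV. lam i * wst i) *\<^sub>R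
           ((\<Sum>i\<in>UNIV. \<Sum>k\<in>UNIV. (lam i * \<xi> i k) *\<^sub>R outer (g k) (g k))
            - outer (\<Sum>i\<in>UNIV. \<Sum>k\<in>UNIV. (lam i * \<xi> i k) *\<^sub>R g k)
                    (\<Sum>k\<in>UNIV. ast k *\<^sub>R g k))) ** Sg ** K = K"
  show "phi_optimal \<Phi> lam g (Amat Q1 K) \<xi>"
    using part2[OF lam_pos Q1_contrast Q1_nozero w_prob a_prob opt] h by blast
qed

end
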